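(* If $G$ is a connected, claw-free, cubic graph, then $\sigma_{(2,2)}(G) \le \sigma_{(2,3)}(G) + 1$.
   Context: A graph is claw-free if it has no induced subgraph isomorphic to $K_{1,3}$; it is cubic if every vertex has degree $3$. $(p,q)$-spreading: let $p\in\mathbb{N}$ and $q\in\mathbb{N}\cup\{\infty\}$. Start with a set $S\subseteq V(G)$ of blue vertices, all other vertices white. The color change rule: if a white vertex $w$ has at least $p$ blue neighbors, and at least one of the blue neighbors of $w$ has at most $q$ white neighbors, then $w$ is recolored blue. $S$ is a $(p,q)$-spreading set if repeatedly applying this rule eventually colors all vertices blue. $\sigma_{(p,q)}(G)$ is the minimum cardinality of a $(p,q)$-spreading set of $G$. *)

theory Defs
  imports Main "HOL-Library.Extended_Nat"
begin

definition simple_graph :: "'a set \<Rightarrow> ('a \<Rightarrow> 'a \<Rightarrow> bool) \<Rightarrow> bool" where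
  "simple_graph V E \<longleftrightarrow> finite V \<and> (\<forall>u v. E u v \<longrightarrow> u \<in> V \<and> v \<in> V)
     \<and> (\<forall>u v. E u v \<longrightarrow> E v u) \<and> (\<forall>v. \<not> E v v)"

definition nbhd :: "'a set \<Rightarrow> ('a \<Rightarrow> 'a \<Rightarrow> bool) \<Rightarrow> 'a \<Rightarrow> 'a set" where
  "nbhd V E v = {u \<in> V. E v u}"

definition cubic :: "'a set \<Rightarrow> ('a \<Rightarrow> 'a \<Rightarrow> bool) \<Rightarrow> bool" where
  "cubic V E \<longleftrightarrow> (\<forall>v \<in> V. card (nbhd V E v) = 3)"

definition connected_graph :: "'a set \<Rightarrow> ('a \<Rightarrow> 'a \<Rightarrow> bool) \<Rightarrow> bool" where
  "connected_graph V E \<longleftrightarrow> V \<noteq> {} \<and>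
     (\<forall>u \<in> V. \<forall>v \<in> V. (u, v) \<in> {(x, y). E x y}\<^sup>*)"

definition claw_free :: "'a set \<Rightarrow> ('a \<Rightarrow> 'a \<Rightarrow> bool) \<Rightarrow> bool" where
  "claw_free V E \<longleftrightarrow> \<not> (\<exists>c \<in> V. \<exists>a b d. E c a \<and> E c b \<and> E c d \<and>
      a \<noteq> b \<and> a \<noteq> d \<and> b \<noteq> d \<and> \<not> E a b \<and> \<not> E a d \<and> \<not> E b d)"

definition color_change ::
  "'a set \<Rightarrow> ('a \<Rightarrow> 'a \<Rightarrow> bool) \<Rightarrow> nat \<Rightarrow> enat \<Rightarrow> 'a set \<Rightarrow> 'a set \<Rightarrow> bool" where
  "color_change V E p q B B' \<longleftrightarrow> (\<exists>w \<in> V - B. B' = insert w B \<and>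
     p \<le> card (nbhd V E w \<inter> B) \<and>
     (\<exists>u \<in> nbhd V E w \<inter> B. enat (card (nbhd V E u - B)) \<le> q))"

definition spreading_set ::
  "'a set \<Rightarrow> ('a \<Rightarrow> 'a \<Rightarrow> bool) \<Rightarrow> nat \<Rightarrow> enat \<Rightarrow> 'a set \<Rightarrow> bool" where
  "spreading_set V E p q S \<longleftrightarrow> S \<subseteq> V \<and> (color_change V E p q)\<^sup>*\<^sup>* S V"

definition sigma :: "'a set \<Rightarrow> ('a \<Rightarrow> 'a \<Rightarrow> bool) \<Rightarrow> nat \<Rightarrow> enat \<Rightarrow> nat" where
  "sigma V E p q = Min (card ` {S. spreading_set V E p q S})"

end

theory Submission
  imports Defs
begin

definition is_tri :: "('a \<Rightarrow> 'a \<Rightarrow> bool) \<Rightarrow> 'a set \<Rightarrow> bool" where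
  "is_tri E D \<longleftrightarrow> (\<exists>a b c. D = {a,b,c} \<and> E a b \<and> E b c \<and> E a c)"

definition inv22 :: "'a set \<Rightarrow> ('a \<Rightarrow> 'a \<Rightarrow> bool) \<Rightarrow> 'a set \<Rightarrow> 'a set \<Rightarrow> 'a set set \<Rightarrow> bool" where
  "inv22 V E T B Ts \<longleftrightarrow> T \<subseteq> B \<and> B \<subseteq> V \<and> (color_change V E 2 2)\<^sup>*\<^sup>* T B \<and>
     (\<forall>v\<in>B. \<exists>u\<in>B. E v u) \<and> finite Ts \<and> (\<forall>D\<in>Ts. D \<subseteq> B \<and> is_tri E D) \<and>
     (\<forall>D1\<in>Ts. \<forall>D2\<in>Ts. D1 \<noteq> D2 \<longrightarrow> D1 \<inter> D2 = {}) \<and> card T = card Ts + 1"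


lemma inv22D:
  assumes "inv22 V E T B Ts"
  shows "T \<subseteq> B" "B \<subseteq> V" "(color_change V E 2 2)\<^sup>*\<^sup>* T B"
    "\<forall>v\<in>B. \<exists>u\<in>B. E v u" "finite Ts" "\<forall>D\<in>Ts. D \<subseteq> B \<and> is_tri E D"
    "\<forall>D1\<in>Ts. \<forall>D2\<in>Ts. D1 \<noteq> D2 \<longrightarrow> D1 \<inter> D2 = {}" "card T = card Ts + 1"
  using assms unfolding inv22_def by simp_all

lemma nb_finite: "simple_graph V E \<Longrightarrow> finite (nbhd V E v)"
  unfolding simple_graph_def nbhd_def by auto

lemma nb_mem: "simple_graph V E \<Longrightarrow> E v u \<Longrightarrow> u \<in> nbhd V E v"
  unfolding simple_graph_def nbhd_def by auto

lemma nb_iff: "simple_graph V E \<Longrightarrow> u \<in> nbhd V E v \<longleftrightarrow> E v u"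
  unfolding simple_graph_def nbhd_def by auto

lemma active_le2:
  assumes sg: "simple_graph V E" and cu: "cubic V E" and uV: "u \<in> V"
    and "u' \<in> B" and "E u u'"
  shows "card (nbhd V E u - B) \<le> 2"
proof -
  have "nbhd V E u - B \<subseteq> nbhd V E u - {u'}" using assms by auto
  hence "card (nbhd V E u - B) \<le> card (nbhd V E u - {u'})"
    by (intro card_mono) (auto simp: nb_finite[OF sg])
  also have "\<dots> = 2" using cu uV nb_mem[OF sg \<open>E u u'\<close>]
    by (simp add: cubic_def card_Diff_singleton nb_finite[OF sg])
  finally show ?thesis .
qed

lemma two_white:
  assumes sg: "simple_graph V E" and cu: "cubic V E" and wV: "w \<in> V"
    and "E w x" "E w y" "x \<noteq> y" "x \<notin> X" "y \<notin> X"
  shows "card (nbhd V E w \<inter> X) \<le> 1"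
proof -
  have sub: "{x,y} \<subseteq> nbhd V E w" using assms nb_mem[OF sg] by auto
  have "nbhd V E w \<inter> X \<subseteq> nbhd V E w - {x,y}" using assms by auto
  hence "card (nbhd V E w \<inter> X) \<le> card (nbhd V E w - {x,y})"
    by (intro card_mono) (auto simp: nb_finite[OF sg])
  also have "\<dots> = card (nbhd V E w) - card {x,y}"
    using sub by (intro card_Diff_subset) auto
  also have "\<dots> = 1" using cu wV \<open>x \<noteq> y\<close> by (simp add: cubic_def)
  finally show ?thesis .
qed

lemma mono_reach:
  assumes sg: "simple_graph V E"
    and "(color_change V E p q)\<^sup>*\<^sup>* X Y"
  shows "(color_change V E p q)\<^sup>*\<^sup>* (insert y X) (insert y Y)"
  using assms(2)
proof (induction rule: rtranclp_induct)
  case base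
  then show ?case by simp
next
  case (step Y0 Y1)
  from step.hyps(2) obtain w u where w: "w \<in> V - Y0" "Y1 = insert w Y0"
    "p \<le> card (nbhd V E w \<inter> Y0)" "u \<in> nbhd V E w \<inter> Y0"
    "enat (card (nbhd V E u - Y0)) \<le> q"
    unfolding color_change_def by blast
  show ?case
  proof (cases "w = y")
    case True
    then have "insert y Y1 = insert y Y0" using w by auto
    then show ?thesis using step.IH by simp
  next
    case False
    have "card (nbhd V E w \<inter> Y0) \<le> card (nbhd V E w \<inter> insert y Y0)"
      by (intro card_mono) (auto simp: nb_finite[OF sg])
    moreover have "card (nbhd V E u - insert y Y0) \<le> card (nbhd V E u - Y0)"
      by (intro card_mono) (auto simp: nb_finite[OF sg])
    ultimately have "color_change V E p q (insert y Y0) (insert y Y1)"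
      unfolding color_change_def using w False
      by (intro bexI[of _ w]) (auto intro!: bexI[of _ u] order.trans[OF _ w(5)])
    then show ?thesis using step.IH by (meson rtranclp.rtrancl_into_rtrancl)
  qed
qed

lemma tri_other:
  assumes sg: "simple_graph V E" and "is_tri E D" "u \<in> D"
  shows "\<exists>p q. p \<noteq> q \<and> p \<in> D \<and> q \<in> D \<and> E u p \<and> E u q"
proof -
  obtain a b c where D: "D = {a,b,c}" "E a b" "E b c" "E a c"
    using assms(2) unfolding is_tri_def by blast
  have sym: "\<And>x y. E x y \<Longrightarrow> E y x" and irr: "\<And>x. \<not> E x x"
    using sg unfolding simple_graph_def by blast+
  have "a \<noteq> b" "b \<noteq> c" "a \<noteq> c" using D irr by metis+
  then show ?thesis using assms(3) D sym by (auto 4 4)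
qed

lemma spread_hits:
  assumes sg: "simple_graph V E" and cu: "cubic V E"
    and sp: "spreading_set V E 2 q S" and tri: "is_tri E D"
  shows "S \<inter> D \<noteq> {}"
proof
  assume S0: "S \<inter> D = {}"
  obtain a b c where D: "D = {a,b,c}" "E a b" "E b c" "E a c"
    using tri unfolding is_tri_def by blast
  have sym: "\<And>x y. E x y \<Longrightarrow> E y x" and irr: "\<And>x. \<not> E x x"
    and inV: "\<And>x y. E x y \<Longrightarrow> x \<in> V"
    using sg unfolding simple_graph_def by blast+
  have ne: "a \<noteq> b" "b \<noteq> c" "a \<noteq> c" using D irr by metis+
  have "(color_change V E 2 q)\<^sup>*\<^sup>* S X \<Longrightarrow> X \<inter> D = {}" for X
  proof (induction rule: rtranclp_induct)
    case base
    then show ?case using S0 .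
  next
    case (step Y0 Y1)
    from step.hyps(2) obtain w where w: "w \<in> V - Y0" "Y1 = insert w Y0"
      "2 \<le> card (nbhd V E w \<inter> Y0)"
      unfolding color_change_def by blast
    have bc: "a \<notin> Y0" "b \<notin> Y0" "c \<notin> Y0" using step.IH D by auto
    have "w \<notin> D"
    proof
      assume "w \<in> D"
      then have "w = a \<or> w = b \<or> w = c" using D by auto
      then have "card (nbhd V E w \<inter> Y0) \<le> 1"
      proof (elim disjE)
        assume "w = a" then show ?thesis
          using two_white[OF sg cu _ _ _ ne(2) bc(2) bc(3)] w D by simp
      next
        assume "w = b" then show ?thesis
          using two_white[OF sg cu _ _ _ ne(3) bc(1) bc(3)] w D sym by simp
      next
        assume "w = c" then show ?thesis
          using two_white[OF sg cu _ _ _ ne(1) bc(1) bc(2)] w D sym by simp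
      qed
      then show False using w(3) by simp
    qed
    then show ?case using step.IH w(2) by auto
  qed
  then have "V \<inter> D = {}" using sp unfolding spreading_set_def by blast
  then show False using D inV by auto
qed

lemma card_tris_le:
  assumes sg: "simple_graph V E" and cu: "cubic V E"
    and sp: "spreading_set V E 2 q S"
    and Ts: "\<forall>D\<in>Ts. is_tri E D" "\<forall>D1\<in>Ts. \<forall>D2\<in>Ts. D1 \<noteq> D2 \<longrightarrow> D1 \<inter> D2 = {}"
  shows "card Ts \<le> card S"
proof -
  define f where "f D = (SOME s. s \<in> S \<inter> D)" for D
  have f: "f D \<in> S \<inter> D" if "D \<in> Ts" for D
    unfolding f_def using spread_hits[OF sg cu sp] Ts(1) that
    by (metis all_not_in_conv someI_ex)
  have "inj_on f Ts"
  proof (rule inj_onI)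
    fix D1 D2 assume D: "D1 \<in> Ts" "D2 \<in> Ts" "f D1 = f D2"
    then have "f D1 \<in> D1" "f D1 \<in> D2" using f by (metis IntD2)+
    then have "D1 \<inter> D2 \<noteq> {}" by blast
    then show "D1 = D2" using Ts(2) D(1,2) by blast
  qed
  moreover have "f ` Ts \<subseteq> S" using f by blast
  moreover have "finite S" using sp sg unfolding spreading_set_def simple_graph_def
    by (meson finite_subset)
  ultimately show ?thesis by (rule card_inj_on_le)
qed

lemma crossing:
  assumes "(a, b) \<in> {(x, y). E x y}\<^sup>*" "a \<in> B" "b \<notin> B"
  shows "\<exists>u w. u \<in> B \<and> w \<notin> B \<and> E u w"
  using assms
proof (induction rule: rtrancl_induct)
  case base
  then show ?case by simp
next
  case (step y z)
  then show ?case by (cases "y \<in> B") auto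
qed


lemma cc_intro:
  assumes "w \<in> V" "w \<notin> B" "p \<le> card (nbhd V E w \<inter> B)" "u \<in> nbhd V E w" "u \<in> B"
    "card (nbhd V E u - B) \<le> 2"
  shows "color_change V E p 2 B (insert w B)"
  unfolding color_change_def using assms
  by (intro bexI[of _ w]) (auto intro!: bexI[of _ u] simp: numeral_eq_enat)

lemma card2_sub:
  assumes sg: "simple_graph V E" and "{a,b} \<subseteq> nbhd V E w \<inter> B" "a \<noteq> b"
  shows "2 \<le> card (nbhd V E w \<inter> B)"
proof -
  have "card {a,b} \<le> card (nbhd V E w \<inter> B)"
    using assms by (intro card_mono) (auto simp: nb_finite[OF sg])
  then show ?thesis using assms(3) by simp
qed

lemma stepA:
  assumes sg: "simple_graph V E" and cu: "cubic V E"
    and inv: "inv22 V E T B Ts" and u: "u \<in> B" "E u w" and w: "w \<notin> B"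
    and two: "2 \<le> card (nbhd V E w \<inter> B)"
  shows "inv22 V E T (insert w B) Ts"
proof -
  have sym: "\<And>x y. E x y \<Longrightarrow> E y x" and inV: "\<And>x y. E x y \<Longrightarrow> x \<in> V"
    using sg unfolding simple_graph_def by blast+
  obtain u' where u': "u' \<in> B" "E u u'" using inv22D(4)[OF inv] u by blast
  have "color_change V E 2 2 B (insert w B)"
    by (rule cc_intro[OF _ w two, of u]) (use u u' inV sym nb_mem[OF sg] active_le2[OF sg cu] in auto)
  then have r: "(color_change V E 2 2)\<^sup>*\<^sup>* T (insert w B)"
    using inv22D(3)[OF inv] by (meson rtranclp.rtrancl_into_rtrancl)
  have wV: "w \<in> V" using inV sym u by blast
  show ?thesis unfolding inv22_def
  proof (intro conjI)
    show "\<forall>v\<in>insert w B. \<exists>u\<in>insert w B. E v u" using inv22D(4)[OF inv] u sym by blast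
    show "\<forall>D\<in>Ts. D \<subseteq> insert w B \<and> is_tri E D" using inv22D(6)[OF inv] by blast
  qed (use r wV inv22D[OF inv] in auto)
qed

lemma stepB:
  assumes sg: "simple_graph V E" and cu: "cubic V E"
    and inv: "inv22 V E T B Ts" and u: "u \<in> B" "E u w"
    and w: "w \<notin> B" and y: "y \<notin> B" "E w y" "E u y"
  shows "inv22 V E (insert w T) (insert y (insert w B)) (insert {u,w,y} Ts)"
proof -
  have sym: "\<And>x y. E x y \<Longrightarrow> E y x" and inV: "\<And>x y. E x y \<Longrightarrow> x \<in> V"
    and irr: "\<And>x. \<not> E x x"
    using sg unfolding simple_graph_def by blast+
  obtain u' where u': "u' \<in> B" "E u u'" using inv22D(4)[OF inv] u by blast
  have TB: "T \<subseteq> B" "B \<subseteq> V" "(color_change V E 2 2)\<^sup>*\<^sup>* T B" "finite Ts"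
    and Ts: "\<forall>D\<in>Ts. D \<subseteq> B \<and> is_tri E D"
    and dis: "\<forall>D1\<in>Ts. \<forall>D2\<in>Ts. D1 \<noteq> D2 \<longrightarrow> D1 \<inter> D2 = {}"
    and act: "\<forall>v\<in>B. \<exists>u\<in>B. E v u" and cT: "card T = card Ts + 1"
    using inv22D[OF inv] by blast+
  have TsB: "\<And>D. D \<in> Ts \<Longrightarrow> D \<subseteq> B" and TsT: "\<And>D. D \<in> Ts \<Longrightarrow> is_tri E D"
    using Ts by auto
  have yw: "y \<noteq> w" using y irr by blast
  have uw: "u \<noteq> w" using u w by blast
  have r1: "(color_change V E 2 2)\<^sup>*\<^sup>* (insert w T) (insert w B)"
    using mono_reach[OF sg TB(3)] .
  have "color_change V E 2 2 (insert w B) (insert y (insert w B))"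
  proof (rule cc_intro)
    show "2 \<le> card (nbhd V E y \<inter> insert w B)"
      by (rule card2_sub[OF sg _ uw]) (use u y sym nb_mem[OF sg] in auto)
    show "card (nbhd V E u - insert w B) \<le> 2"
      by (rule active_le2[OF sg cu _ _ u'(2)]) (use u' inV in auto)
  qed (use y yw u sym inV nb_mem[OF sg] in auto)
  then have r2: "(color_change V E 2 2)\<^sup>*\<^sup>* (insert w T) (insert y (insert w B))"
    using r1 by (meson rtranclp.rtrancl_into_rtrancl)
  have tri: "is_tri E {u,w,y}" unfolding is_tri_def using u y by blast
  have notin: "{u,w,y} \<notin> Ts"
  proof
    assume "{u,w,y} \<in> Ts"
    then have "{u,w,y} \<subseteq> B" by (rule TsB)
    then show False using w by simp
  qed
  have disj: "{u,w,y} \<inter> D = {}" if D: "D \<in> Ts" for D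
  proof (rule ccontr)
    assume "{u,w,y} \<inter> D \<noteq> {}"
    then have "u \<in> D" using TsB[OF D] w y by blast
    then obtain p q where pq: "p \<noteq> q" "p \<in> D" "q \<in> D" "E u p" "E u q"
      using tri_other[OF sg TsT[OF D]] by blast
    have pqB: "p \<in> B" "q \<in> B" using pq TsB[OF D] by blast+
    have "{w,y,p,q} \<subseteq> nbhd V E u" using pq u y sym nb_mem[OF sg] by auto
    then have "card {w,y,p,q} \<le> card (nbhd V E u)"
      by (intro card_mono) (auto simp: nb_finite[OF sg])
    moreover have "card {w,y,p,q} = 4"
    proof -
      have "w \<noteq> p" "w \<noteq> q" "y \<noteq> p" "y \<noteq> q" using pqB w y by auto
      then show ?thesis using pq(1) yw by simp
    qed
    moreover have "card (nbhd V E u) = 3" using cu inV u unfolding cubic_def by blast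
    ultimately show False by simp
  qed
  have wT: "w \<notin> T" using TB w by blast
  show ?thesis unfolding inv22_def
  proof (intro conjI)
    show "insert w T \<subseteq> insert y (insert w B)" using TB by auto
    show "insert y (insert w B) \<subseteq> V" using TB inV[OF sym[OF y(2)]] inV[OF sym[OF u(2)]] by auto
    show "\<forall>v\<in>insert y (insert w B). \<exists>u\<in>insert y (insert w B). E v u"
      using act u y sym by blast
    show "\<forall>D\<in>insert {u, w, y} Ts. D \<subseteq> insert y (insert w B) \<and> is_tri E D"
    proof
      fix D assume "D \<in> insert {u, w, y} Ts"
      then consider "D = {u, w, y}" | "D \<in> Ts" by blast
      then show "D \<subseteq> insert y (insert w B) \<and> is_tri E D"
      proof cases
        case 1 then show ?thesis using tri u by auto
      next
        case 2 then show ?thesis using TsB[OF 2] TsT[OF 2] by auto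
      qed
    qed
    show "\<forall>D1\<in>insert {u, w, y} Ts. \<forall>D2\<in>insert {u, w, y} Ts. D1 \<noteq> D2 \<longrightarrow> D1 \<inter> D2 = {}"
    proof (intro ballI impI)
      fix D1 D2 assume D: "D1 \<in> insert {u, w, y} Ts" "D2 \<in> insert {u, w, y} Ts" "D1 \<noteq> D2"
      show "D1 \<inter> D2 = {}"
      proof (cases "D1 = {u, w, y}")
        case True
        then have "D2 \<in> Ts" using D by blast
        then show ?thesis using True disj by blast
      next
        case False
        then have d1: "D1 \<in> Ts" using D by blast
        show ?thesis
        proof (cases "D2 = {u, w, y}")
          case True then show ?thesis using d1 disj by blast
        next
          case False then have "D2 \<in> Ts" using D by blast
          then show ?thesis using dis d1 D(3) by blast
        qed
      qed
    qed
    show "card (insert w T) = card (insert {u, w, y} Ts) + 1"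
      using cT wT notin TB(4) finite_subset[OF TB(1)] finite_subset[OF TB(2)] sg
      unfolding simple_graph_def by auto
  qed (use r2 TB in auto)
qed

lemma stepC:
  assumes sg: "simple_graph V E" and cu: "cubic V E"
    and inv: "inv22 V E T B Ts" and u: "u \<in> B" "E u w"
    and w: "w \<notin> B" and y: "y \<notin> B" "E w y" and z: "z \<notin> B" "E w z" "E y z"
  shows "inv22 V E (insert y T) (insert z (insert w (insert y B))) (insert {w,y,z} Ts)"
proof -
  have sym: "\<And>x y. E x y \<Longrightarrow> E y x" and inV: "\<And>x y. E x y \<Longrightarrow> x \<in> V"
    and irr: "\<And>x. \<not> E x x"
    using sg unfolding simple_graph_def by blast+
  obtain u' where u': "u' \<in> B" "E u u'" using inv22D(4)[OF inv] u by blast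
  have TB: "T \<subseteq> B" "B \<subseteq> V" "(color_change V E 2 2)\<^sup>*\<^sup>* T B" "finite Ts"
    and Ts: "\<forall>D\<in>Ts. D \<subseteq> B \<and> is_tri E D"
    and dis: "\<forall>D1\<in>Ts. \<forall>D2\<in>Ts. D1 \<noteq> D2 \<longrightarrow> D1 \<inter> D2 = {}"
    and act: "\<forall>v\<in>B. \<exists>u\<in>B. E v u" and cT: "card T = card Ts + 1"
    using inv22D[OF inv] by blast+
  have TsB: "\<And>D. D \<in> Ts \<Longrightarrow> D \<subseteq> B" and TsT: "\<And>D. D \<in> Ts \<Longrightarrow> is_tri E D"
    using Ts by auto
  have yw: "y \<noteq> w" using y irr by blast
  have zw: "z \<noteq> w" using z irr by blast
  have zy: "z \<noteq> y" using z irr by blast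
  have uy: "u \<noteq> y" using u y by blast
  have r1: "(color_change V E 2 2)\<^sup>*\<^sup>* (insert y T) (insert y B)"
    using mono_reach[OF sg TB(3)] .
  have "color_change V E 2 2 (insert y B) (insert w (insert y B))"
  proof (rule cc_intro)
    show "2 \<le> card (nbhd V E w \<inter> insert y B)"
      by (rule card2_sub[OF sg _ uy]) (use u y sym nb_mem[OF sg] in auto)
    show "card (nbhd V E u - insert y B) \<le> 2"
      by (rule active_le2[OF sg cu _ _ u'(2)]) (use u' inV in auto)
  qed (use w yw u sym inV nb_mem[OF sg] in auto)
  then have r2: "(color_change V E 2 2)\<^sup>*\<^sup>* (insert y T) (insert w (insert y B))"
    using r1 by (meson rtranclp.rtrancl_into_rtrancl)
  have "color_change V E 2 2 (insert w (insert y B)) (insert z (insert w (insert y B)))"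
  proof (rule cc_intro)
    show "2 \<le> card (nbhd V E z \<inter> insert w (insert y B))"
      by (rule card2_sub[OF sg _ yw]) (use z y sym nb_mem[OF sg] in auto)
    show "card (nbhd V E w - insert w (insert y B)) \<le> 2"
      by (rule active_le2[OF sg cu _ _ sym[OF u(2)]]) (use u inV sym in auto)
  qed (use z zw zy sym inV nb_mem[OF sg] in auto)
  then have r3: "(color_change V E 2 2)\<^sup>*\<^sup>* (insert y T) (insert z (insert w (insert y B)))"
    using r2 by (meson rtranclp.rtrancl_into_rtrancl)
  have tri: "is_tri E {w,y,z}" unfolding is_tri_def using y z by blast
  have notin: "{w,y,z} \<notin> Ts"
  proof
    assume "{w,y,z} \<in> Ts"
    then have "{w,y,z} \<subseteq> B" by (rule TsB)
    then show False using w by simp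
  qed
  have disj: "{w,y,z} \<inter> D = {}" if D: "D \<in> Ts" for D
    using TsB[OF D] w y z by blast
  have yT: "y \<notin> T" using TB y by blast
  show ?thesis unfolding inv22_def
  proof (intro conjI)
    show "insert y T \<subseteq> insert z (insert w (insert y B))" using TB by auto
    show "insert z (insert w (insert y B)) \<subseteq> V" using TB inV[OF sym[OF y(2)]] inV[OF sym[OF z(2)]] inV[OF sym[OF u(2)]] by auto
    show "\<forall>v\<in>insert z (insert w (insert y B)). \<exists>u\<in>insert z (insert w (insert y B)). E v u"
      using act u y z sym by blast
    show "\<forall>D\<in>insert {w,y,z} Ts. D \<subseteq> insert z (insert w (insert y B)) \<and> is_tri E D"
    proof
      fix D assume "D \<in> insert {w,y,z} Ts"
      then consider "D = {w,y,z}" | "D \<in> Ts" by blast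
      then show "D \<subseteq> insert z (insert w (insert y B)) \<and> is_tri E D"
      proof cases
        case 1 then show ?thesis using tri u by auto
      next
        case 2 then show ?thesis using TsB[OF 2] TsT[OF 2] by auto
      qed
    qed
    show "\<forall>D1\<in>insert {w,y,z} Ts. \<forall>D2\<in>insert {w,y,z} Ts. D1 \<noteq> D2 \<longrightarrow> D1 \<inter> D2 = {}"
    proof (intro ballI impI)
      fix D1 D2 assume D: "D1 \<in> insert {w,y,z} Ts" "D2 \<in> insert {w,y,z} Ts" "D1 \<noteq> D2"
      show "D1 \<inter> D2 = {}"
      proof (cases "D1 = {w,y,z}")
        case True
        then have "D2 \<in> Ts" using D by blast
        then show ?thesis using True disj by blast
      next
        case False
        then have d1: "D1 \<in> Ts" using D by blast
        show ?thesis
        proof (cases "D2 = {w,y,z}")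
          case True then show ?thesis using d1 disj by blast
        next
          case False then have "D2 \<in> Ts" using D by blast
          then show ?thesis using dis d1 D(3) by blast
        qed
      qed
    qed
    show "card (insert y T) = card (insert {w,y,z} Ts) + 1"
      using cT yT notin TB(4) finite_subset[OF TB(1)] finite_subset[OF TB(2)] sg
      unfolding simple_graph_def by auto
  qed (use r3 TB in auto)
qed


lemma step_main:
  assumes sg: "simple_graph V E" and cu: "cubic V E" and cf: "claw_free V E"
    and co: "connected_graph V E"
    and inv: "inv22 V E T B Ts" and BV: "B \<noteq> V"
  shows "\<exists>T' B' Ts'. inv22 V E T' B' Ts' \<and> B \<subset> B'"
proof -
  have sym: "\<And>x y. E x y \<Longrightarrow> E y x" and inV: "\<And>x y. E x y \<Longrightarrow> x \<in> V"
    and irr: "\<And>x. \<not> E x x"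
    using sg unfolding simple_graph_def by blast+
  have TB: "T \<subseteq> B" "B \<subseteq> V" "card T = card Ts + 1" using inv22D[OF inv] by blast+
  have "T \<noteq> {}" using TB(3) by auto
  then obtain b where b: "b \<in> B" using TB(1) by blast
  obtain v where v: "v \<in> V" "v \<notin> B" using BV TB(2) by blast
  have "(b, v) \<in> {(x, y). E x y}\<^sup>*" using co b v TB(2) unfolding connected_graph_def by blast
  then obtain u w where uw: "u \<in> B" "w \<notin> B" "E u w" using crossing b v by metis
  have wV: "w \<in> V" using inV sym uw by blast
  have uN: "u \<in> nbhd V E w" using nb_mem[OF sg] sym uw by blast
  show ?thesis
  proof (cases "2 \<le> card (nbhd V E w \<inter> B)")
    case True
    then show ?thesis using stepA[OF sg cu inv uw(1) uw(3) uw(2) True] uw by blast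
  next
    case False
    have "card (nbhd V E w - {u}) = 2"
      using cu wV uN unfolding cubic_def by (simp add: card_Diff_singleton nb_finite[OF sg])
    then obtain y z where yz: "nbhd V E w - {u} = {y,z}" "y \<noteq> z" by (auto simp: card_2_iff)
    have yzN: "y \<in> nbhd V E w" "z \<in> nbhd V E w" "y \<noteq> u" "z \<noteq> u" using yz by blast+
    have yE: "E w y" "E w z" using yzN nb_iff[OF sg] by blast+
    have yB: "y \<notin> B"
    proof
      assume "y \<in> B"
      then have "2 \<le> card (nbhd V E w \<inter> B)"
        by (intro card2_sub[OF sg _ yzN(3)[symmetric]]) (use uN uw yzN in auto)
      then show False using False by simp
    qed
    have zB: "z \<notin> B"
    proof
      assume "z \<in> B"
      then have "2 \<le> card (nbhd V E w \<inter> B)"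
        by (intro card2_sub[OF sg _ yzN(4)[symmetric]]) (use uN uw yzN in auto)
      then show False using False by simp
    qed
    have "E u y \<or> E u z \<or> E y z"
      using cf wV sym[OF uw(3)] yE yzN yz(2) unfolding claw_free_def by blast
    then show ?thesis
    proof (elim disjE)
      assume "E u y"
      then show ?thesis using stepB[OF sg cu inv uw(1) uw(3) uw(2) yB yE(1)] uw by blast
    next
      assume "E u z"
      then show ?thesis using stepB[OF sg cu inv uw(1) uw(3) uw(2) zB yE(2)] uw by blast
    next
      assume "E y z"
      then show ?thesis using stepC[OF sg cu inv uw(1) uw(3) uw(2) yB yE(1) zB yE(2)] uw by blast
    qed
  qed
qed

lemma reach_all:
  assumes sg: "simple_graph V E" and cu: "cubic V E" and cf: "claw_free V E"
    and co: "connected_graph V E"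
  shows "inv22 V E T B Ts \<Longrightarrow> \<exists>T' Ts'. inv22 V E T' V Ts'"
proof (induction "card (V - B)" arbitrary: T B Ts rule: less_induct)
  case less
  show ?case
  proof (cases "B = V")
    case True
    then show ?thesis using less.prems by blast
  next
    case False
    obtain T' B' Ts' where n: "inv22 V E T' B' Ts'" "B \<subset> B'"
      using step_main[OF sg cu cf co less.prems False] by blast
    have "B' \<subseteq> V" using inv22D(2)[OF n(1)] by blast
    then have "V - B' \<subset> V - B" using n(2) by blast
    then have "card (V - B') < card (V - B)"
      using sg unfolding simple_graph_def by (meson finite_Diff psubset_card_mono)
    then show ?thesis using less.hyps n(1) by blast
  qed
qed

lemma init_tri:
  assumes sg: "simple_graph V E" and cu: "cubic V E"
    and e: "E v a" "E v b" "E a b"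
  shows "inv22 V E {v,a} {b,v,a} {{v,a,b}}"
proof -
  have sym: "\<And>x y. E x y \<Longrightarrow> E y x" and inV: "\<And>x y. E x y \<Longrightarrow> x \<in> V"
    and irr: "\<And>x. \<not> E x x"
    using sg unfolding simple_graph_def by blast+
  have ne: "v \<noteq> a" "v \<noteq> b" "a \<noteq> b" using e irr by metis+
  have "color_change V E 2 2 {v,a} (insert b {v,a})"
  proof (rule cc_intro)
    show "2 \<le> card (nbhd V E b \<inter> {v, a})"
      by (rule card2_sub[OF sg _ ne(1)]) (use e sym nb_mem[OF sg] in auto)
    show "card (nbhd V E v - {v, a}) \<le> 2"
      by (rule active_le2[OF sg cu _ _ e(1)]) (use e inV in auto)
  qed (use e ne sym inV nb_mem[OF sg] in auto)
  then have r: "(color_change V E 2 2)\<^sup>*\<^sup>* {v,a} {b,v,a}" by auto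
  have tri: "is_tri E {v,a,b}" unfolding is_tri_def using e by blast
  show ?thesis unfolding inv22_def
    using r tri e sym inV ne by auto
qed

lemma init_exists:
  assumes sg: "simple_graph V E" and cu: "cubic V E" and cf: "claw_free V E"
    and co: "connected_graph V E"
  shows "\<exists>T B Ts. inv22 V E T B Ts"
proof -
  have sym: "\<And>x y. E x y \<Longrightarrow> E y x"
    using sg unfolding simple_graph_def by blast+
  obtain v where v: "v \<in> V" using co unfolding connected_graph_def by blast
  then have "card (nbhd V E v) = 3" using cu unfolding cubic_def by blast
  then obtain a b c where abc: "nbhd V E v = {a,b,c}" "a \<noteq> b" "b \<noteq> c" "a \<noteq> c"
    by (auto simp: card_3_iff)
  have E: "E v a" "E v b" "E v c" using abc nb_iff[OF sg] by blast+
  have "E a b \<or> E a c \<or> E b c" using cf v E abc unfolding claw_free_def by blast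
  then show ?thesis
  proof (elim disjE)
    assume "E a b" then show ?thesis using init_tri[OF sg cu E(1) E(2)] by blast
  next
    assume "E a c" then show ?thesis using init_tri[OF sg cu E(1) E(3)] by blast
  next
    assume "E b c" then show ?thesis using init_tri[OF sg cu E(2) E(3)] by blast
  qed
qed

lemma sigma_facts:
  assumes sg: "simple_graph V E"
  shows "finite (card ` {S. spreading_set V E p q S})"
    and "card ` {S. spreading_set V E p q S} \<noteq> {}"
proof -
  have "{S. spreading_set V E p q S} \<subseteq> Pow V" unfolding spreading_set_def by auto
  then show "finite (card ` {S. spreading_set V E p q S})"
    using sg unfolding simple_graph_def by (meson finite_Pow_iff finite_imageI finite_subset)
  have "spreading_set V E p q V" unfolding spreading_set_def by auto
  then show "card ` {S. spreading_set V E p q S} \<noteq> {}" by blast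
qed

theorem proposition4p7:
  fixes V :: "'a set" and E :: "'a \<Rightarrow> 'a \<Rightarrow> bool"
  assumes "simple_graph V E"
      and "connected_graph V E"
      and "claw_free V E"
      and "cubic V E"
  shows "sigma V E 2 2 \<le> sigma V E 2 3 + 1"
proof -
  note sg = assms(1) and co = assms(2) and cf = assms(3) and cu = assms(4)
  obtain T0 B0 Ts0 where "inv22 V E T0 B0 Ts0" using init_exists[OF sg cu cf co] by blast
  then obtain T Ts where inv: "inv22 V E T V Ts" using reach_all[OF sg cu cf co] by blast
  have TV: "T \<subseteq> V" "(color_change V E 2 2)\<^sup>*\<^sup>* T V"
    using inv22D(1-3)[OF inv] by auto
  then have spT: "spreading_set V E 2 2 T" unfolding spreading_set_def by simp
  have s22: "sigma V E 2 2 \<le> card T"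
    unfolding sigma_def using spT sigma_facts(1)[OF sg] by (intro Min_le) auto
  have "sigma V E 2 3 \<in> card ` {S. spreading_set V E 2 3 S}"
    unfolding sigma_def using sigma_facts[OF sg] by (rule Min_in)
  then obtain S where S: "spreading_set V E 2 3 S" "sigma V E 2 3 = card S" by blast
  have "card Ts \<le> card S"
    using card_tris_le[OF sg cu S(1)] inv22D(6,7)[OF inv] by blast
  moreover have "card T = card Ts + 1" using inv22D(8)[OF inv] .
  ultimately show ?thesis using s22 S(2) by simp
qed

end
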